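(* Let $S$ be a quasi-thin scheme on $X$ and $\mathbb F$ a field. Then $S$ is triply regular if and only if there do not exist $R_u,R_v,R_w,R_y,R_z\in S$ with $k_u=k_v=k_w=k_y=k_z=2$ and $p_{uv}^w=p_{wy}^z=|R_{u'}R_z|=1$.
   Context: Let $X$ be a nonempty finite set. A scheme of class $d$ on $X$ is a partition $S=\{R_0,\dots,R_d\}$ of $X\times X$ into nonempty sets such that $R_0=\{(b,b):b\in X\}$; for each $c$ there is $c'$ with $R_{c'}=\{(f,e):(e,f)\in R_c\}$; and for all $i,j,k$ the intersection number $p_{ij}^k=|\{\ell\in X:(m,\ell)\in R_i,(\ell,n)\in R_j\}|$ does not depend on $(m,n)\in R_k$. The valency is $k_a=p_{aa'}^0$; quasi-thin means all $k_a\le 2$; complex product $R_aR_b=\{R_c:p_{ab}^c>0\}$. For $y\in X$, $yR_a=\{z:(y,z)\in R_a\}$; $A_a\in M_X(\mathbb F)$ is the $(0,1)$ adjacency matrix of $R_a$ and $E_a^*(y)$ is the diagonal $(0,1)$-matrix with ones exactly at positions indexed by $yR_a$. $S$ is triply regular if for every $y\in X$ the $\mathbb F$-linear span of all products $E_i^*(y)A_jE_\ell^*(y)$ ($R_i,R_j,R_\ell\in S$) is a unital $\mathbb F$-subalgebra of $M_X(\mathbb F)$. *)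

theory Defs
  imports Main
begin

text \<open>The ground set X is a finite type 'x (types are nonempty). A scheme is a set S
of relations on 'x partitioning UNIV \<times> UNIV.\<close>

definition is_scheme :: "('x::finite \<times> 'x) set set \<Rightarrow> bool" where
  "is_scheme S \<longleftrightarrow>
     (\<forall>R\<in>S. R \<noteq> {}) \<and> \<Union>S = UNIV \<and>
     (\<forall>R\<in>S. \<forall>Q\<in>S. R \<noteq> Q \<longrightarrow> R \<inter> Q = {}) \<and>
     Id \<in> S \<and>
     (\<forall>R\<in>S. converse R \<in> S) \<and>
     (\<forall>i\<in>S. \<forall>j\<in>S. \<forall>k\<in>S. \<forall>m n m' n'. (m,n) \<in> k \<longrightarrow> (m',n') \<in> k \<longrightarrow>
        card {l. (m,l) \<in> i \<and> (l,n) \<in> j} = card {l. (m',l) \<in> i \<and> (l,n') \<in> j})"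

text \<open>Intersection number p_{ij}^k (well defined for relations of a scheme).\<close>
definition inum :: "('x::finite \<times> 'x) set \<Rightarrow> ('x \<times> 'x) set \<Rightarrow> ('x \<times> 'x) set \<Rightarrow> nat" where
  "inum i j k = (SOME c. \<forall>m n. (m,n) \<in> k \<longrightarrow> card {l. (m,l) \<in> i \<and> (l,n) \<in> j} = c)"

definition valency :: "('x::finite \<times> 'x) set \<Rightarrow> nat" where
  "valency a = inum a (converse a) Id"

definition quasi_thin :: "('x::finite \<times> 'x) set set \<Rightarrow> bool" where
  "quasi_thin S \<longleftrightarrow> (\<forall>a\<in>S. valency a \<le> 2)"

definition cprod :: "('x::finite \<times> 'x) set set \<Rightarrow> ('x \<times> 'x) set \<Rightarrow> ('x \<times> 'x) set \<Rightarrow> ('x \<times> 'x) set set" where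
  "cprod S a b = {c \<in> S. inum a b c > 0}"

type_synonym ('x, 'f) mat = "'x \<Rightarrow> 'x \<Rightarrow> 'f"

definition adj :: "('x \<times> 'x) set \<Rightarrow> ('x, 'f::field) mat" where
  "adj R = (\<lambda>a b. if (a,b) \<in> R then 1 else 0)"

definition dual_idem :: "'x \<Rightarrow> ('x \<times> 'x) set \<Rightarrow> ('x, 'f::field) mat" where
  "dual_idem y R = (\<lambda>a b. if a = b \<and> (y,a) \<in> R then 1 else 0)"

definition mmult :: "('x::finite, 'f::field) mat \<Rightarrow> ('x, 'f) mat \<Rightarrow> ('x, 'f) mat" where
  "mmult A B = (\<lambda>a c. \<Sum>b\<in>UNIV. A a b * B b c)"

definition mone :: "('x, 'f::field) mat" where
  "mone = (\<lambda>a b. if a = b then 1 else 0)"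

definition mspan :: "('x, 'f::field) mat set \<Rightarrow> ('x, 'f) mat set" where
  "mspan G = {M. \<exists>c F. finite F \<and> F \<subseteq> G \<and> M = (\<lambda>a b. \<Sum>g\<in>F. c g * g a b)}"

definition unital_subalgebra :: "('x::finite, 'f::field) mat set \<Rightarrow> bool" where
  "unital_subalgebra A \<longleftrightarrow>
     (\<forall>M\<in>A. \<forall>N\<in>A. (\<lambda>a b. M a b + N a b) \<in> A) \<and>
     (\<forall>c. \<forall>M\<in>A. (\<lambda>a b. c * M a b) \<in> A) \<and>
     (\<lambda>a b. 0) \<in> A \<and>
     mone \<in> A \<and>
     (\<forall>M\<in>A. \<forall>N\<in>A. mmult M N \<in> A)"

definition triply_regular :: "'f::field itself \<Rightarrow> ('x::finite \<times> 'x) set set \<Rightarrow> bool" where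
  "triply_regular _ S \<longleftrightarrow>
     (\<forall>y. unital_subalgebra
        (mspan {mmult (mmult (dual_idem y i) (adj j)) (dual_idem y l) :: ('x,'f) mat
                | i j l. i \<in> S \<and> j \<in> S \<and> l \<in> S}))"

end

theory Submission
  imports Defs
begin

locale qs =
  fixes S :: "('x::finite \<times> 'x) set set"
  assumes sch: "is_scheme S"
begin

lemma finS: "finite S"
  by (rule finite_subset[of S "Pow UNIV"]) simp_all

lemma sp1: "\<forall>R\<in>S. R \<noteq> {}" using sch unfolding is_scheme_def by (elim conjE) assumption
lemma sp2: "\<Union>S = UNIV" using sch unfolding is_scheme_def by (elim conjE) assumption
lemma sp3: "\<forall>R\<in>S. \<forall>Q\<in>S. R \<noteq> Q \<longrightarrow> R \<inter> Q = {}" using sch unfolding is_scheme_def by (elim conjE) assumption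
lemma Id_in: "Id \<in> S" using sch unfolding is_scheme_def by (elim conjE) assumption
lemma sp5: "\<forall>R\<in>S. converse R \<in> S" using sch unfolding is_scheme_def by (elim conjE) assumption
lemma sp6: "\<forall>i\<in>S. \<forall>j\<in>S. \<forall>k\<in>S. \<forall>m n m' n'. (m,n) \<in> k \<longrightarrow> (m',n') \<in> k \<longrightarrow>
        card {l. (m,l) \<in> i \<and> (l,n) \<in> j} = card {l. (m',l) \<in> i \<and> (l,n') \<in> j}"
  using sch unfolding is_scheme_def by (elim conjE) assumption

lemma ex_rel: "\<exists>r\<in>S. (p,q) \<in> r"
  using sp2 by blast

lemma uniq_rel: "r \<in> S \<Longrightarrow> r' \<in> S \<Longrightarrow> (p,q) \<in> r \<Longrightarrow> (p,q) \<in> r' \<Longrightarrow> r = r'"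
  using sp3 by blast

lemma conv_in: "r \<in> S \<Longrightarrow> converse r \<in> S" using sp5 by blast
lemma nonempty: "r \<in> S \<Longrightarrow> r \<noteq> {}" using sp1 by blast

lemma inum_eq:
  assumes "i \<in> S" "j \<in> S" "k \<in> S" "(p,q) \<in> k"
  shows "inum i j k = card {l. (p,l) \<in> i \<and> (l,q) \<in> j}"
proof -
  have reg: "\<forall>m n. (m,n) \<in> k \<longrightarrow> card {l. (m,l) \<in> i \<and> (l,n) \<in> j} = card {l. (p,l) \<in> i \<and> (l,q) \<in> j}"
    using sp6 assms by blast
  show ?thesis unfolding inum_def
  proof (rule someI2[of _ "card {l. (p,l) \<in> i \<and> (l,q) \<in> j}"])
    show "\<forall>m n. (m,n) \<in> k \<longrightarrow> card {l. (m,l) \<in> i \<and> (l,n) \<in> j} = card {l. (p,l) \<in> i \<and> (l,q) \<in> j}"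
      using reg .
  next
    fix c assume "\<forall>m n. (m,n) \<in> k \<longrightarrow> card {l. (m,l) \<in> i \<and> (l,n) \<in> j} = c"
    thus "c = card {l. (p,l) \<in> i \<and> (l,q) \<in> j}" using assms(4) by simp
  qed
qed

lemma val_eq: assumes "a \<in> S" shows "valency a = card {x. (p,x) \<in> a}"
  unfolding valency_def using inum_eq[OF assms conv_in[OF assms] Id_in, of p p] by simp

lemma card_rel: assumes "a \<in> S" shows "card a = card (UNIV :: 'x set) * valency a"
proof -
  have e: "a = Sigma UNIV (\<lambda>p. {x. (p,x) \<in> a})" by auto
  have "card a = card (Sigma UNIV (\<lambda>p. {x. (p,x) \<in> a}))" by (rule arg_cong[where f=card, OF e])
  also have "\<dots> = (\<Sum>p\<in>UNIV. card {x. (p,x) \<in> a})" by (rule card_SigmaI) simp_all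
  also have "\<dots> = (\<Sum>p\<in>(UNIV::'x set). valency a)" by (rule sum.cong) (simp_all add: val_eq[OF assms, symmetric])
  also have "\<dots> = card (UNIV :: 'x set) * valency a" by simp
  finally show ?thesis .
qed

lemma val_conv: assumes "a \<in> S" shows "valency (converse a) = valency a"
proof -
  have "card (UNIV :: 'x set) * valency (converse a) = card (UNIV :: 'x set) * valency a"
    using card_rel[OF assms] card_rel[OF conv_in[OF assms]] card_inverse[of a] by simp
  moreover have "card (UNIV :: 'x set) > 0" by (rule finite_UNIV_card_ge_0) simp
  ultimately show ?thesis by simp
qed

lemma val_eq': assumes "a \<in> S" shows "valency a = card {x. (x,p) \<in> a}"
  using val_eq[OF conv_in[OF assms], of p] val_conv[OF assms] by simp

end

locale qts = qs S for S :: "('x::finite \<times> 'x) set set" +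
  assumes qt: "quasi_thin S"
begin
lemma le2: assumes "a \<in> S" shows "card {x. (p,x) \<in> a} \<le> 2"
proof -
  have "valency a \<le> 2" using qt assms unfolding quasi_thin_def by blast
  thus ?thesis using val_eq[OF assms, of p] by simp
qed
end



lemma DC:
  fixes A :: "'a set" and B :: "'b set"
  assumes "finite A" "finite B" "\<forall>x\<in>A. card {y\<in>B. E x y} = 1" "\<forall>y\<in>B. card {x\<in>A. E x y} = s"
  shows "card A = card B * s"
proof -
  have c1: "\<And>x. card {y\<in>B. E x y} = (\<Sum>y\<in>B. of_bool (E x y))"
    using assms(2) by (simp add: Int_def)
  have c2: "\<And>y. card {x\<in>A. E x y} = (\<Sum>x\<in>A. of_bool (E x y))"
    using assms(1) by (simp add: Int_def)
  have "card A = (\<Sum>x\<in>A. card {y\<in>B. E x y})" using assms(3) by simp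
  also have "\<dots> = (\<Sum>x\<in>A. \<Sum>y\<in>B. (of_bool (E x y) :: nat))" using c1 by simp
  also have "\<dots> = (\<Sum>y\<in>B. \<Sum>x\<in>A. (of_bool (E x y) :: nat))" by (rule sum.swap)
  also have "\<dots> = (\<Sum>y\<in>B. card {x\<in>A. E x y})" using c2 by simp
  also have "\<dots> = card B * s" using assms(4) by simp
  finally show ?thesis .
qed

lemma sum_eq_const:
  fixes f :: "'a \<Rightarrow> 'c::comm_semiring_1"
  assumes "finite A" "finite B" "card A = card B" "\<forall>x\<in>A. \<forall>y\<in>B. f x = g y"
  shows "sum f A = sum g B"
proof (cases "A = {}")
  case True
  then have "B = {}" using assms by simp
  then show ?thesis using True by simp
next
  case False
  then obtain x0 where x0: "x0 \<in> A" by blast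
  then have "B \<noteq> {}" using assms False by auto
  then obtain y0 where y0: "y0 \<in> B" by blast
  have "sum f A = sum (\<lambda>_. g y0) A" using assms(4) y0 by (intro sum.cong) auto
  moreover have "sum g B = sum (\<lambda>_. g y0) B" using assms(4) x0 y0 by (intro sum.cong) metis+
  ultimately show ?thesis using assms(3) by simp
qed



lemma two_le: assumes "finite Y" "u \<in> Y" "v \<in> Y" "u \<noteq> v" shows "2 \<le> card Y"
proof -
  have "card {u,v} \<le> card Y" using assms by (intro card_mono) auto
  thus ?thesis using assms(4) by simp
qed

lemma card1_eq: assumes "card A = 1" "u \<in> A" "v \<in> A" shows "u = v"
proof -
  obtain w where "A = {w}" using assms(1) card_1_singleton_iff by (metis One_nat_def)
  thus ?thesis using assms by simp
qed

context qts begin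

lemma card2_eq: assumes "r \<in> S" "X \<subseteq> {x. (p,x) \<in> r}" "card X = 2" shows "X = {x. (p,x) \<in> r}"
proof -
  have "card {x. (p,x) \<in> r} \<le> card X" using le2[OF assms(1), of p] assms(3) by simp
  thus ?thesis using assms(2) by (intro card_seteq) simp_all
qed

lemma fail:
  assumes S: "i \<in> S" "k \<in> S" "n \<in> S" "l \<in> S" "j \<in> S" "m \<in> S"
  and r: "(p,a) \<in> i" "(p,a') \<in> i" "(a,b) \<in> k" "(a',b') \<in> k" "(p,b) \<in> n" "(p,b') \<in> n"
  and cT: "card {x. (p,x) \<in> l \<and> (a,x) \<in> j} = 1" "card {x. (p,x) \<in> l \<and> (a',x) \<in> j} = 1"
  and cU: "card {x. (p,x) \<in> l \<and> (x,b) \<in> m} = 1" "card {x. (p,x) \<in> l \<and> (x,b') \<in> m} = 1"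
  and cV: "card {x. (a,x) \<in> j \<and> (x,b) \<in> m} = 1" "card {x. (a',x) \<in> j \<and> (x,b') \<in> m} = 1"
  and x0: "(p,x0) \<in> l" "(a,x0) \<in> j" "(x0,b) \<in> m"
  and N0: "{x. (p,x) \<in> l \<and> (a',x) \<in> j \<and> (x,b') \<in> m} = {}"
  shows "\<exists>u\<in>S. \<exists>v\<in>S. \<exists>w\<in>S. \<exists>y\<in>S. \<exists>z\<in>S.
          valency u = 2 \<and> valency v = 2 \<and> valency w = 2 \<and> valency y = 2 \<and> valency z = 2 \<and>
          inum u v w = 1 \<and> inum w y z = 1 \<and> card (cprod S (converse u) z) = 1"
proof -
  define L where "L = {x. (p,x) \<in> l}"
  define I where "I = {x. (p,x) \<in> i}"
  define Nn where "Nn = {x. (p,x) \<in> n}"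
  obtain p1 where p1: "{x. (p,x) \<in> l \<and> (a',x) \<in> j} = {p1}" using cT(2) card_1_singleton_iff by (metis One_nat_def)
  obtain q1 where q1: "{x. (p,x) \<in> l \<and> (x,b') \<in> m} = {q1}" using cU(2) card_1_singleton_iff by (metis One_nat_def)
  obtain r0 where r0: "{x. (a',x) \<in> j \<and> (x,b') \<in> m} = {r0}" using cV(2) card_1_singleton_iff by (metis One_nat_def)
  have p1m: "(p,p1) \<in> l" "(a',p1) \<in> j" using p1 by auto
  have q1m: "(p,q1) \<in> l" "(q1,b') \<in> m" using q1 by auto
  have r0m: "(a',r0) \<in> j" "(r0,b') \<in> m" using r0 by auto
  have pq: "p1 \<noteq> q1" using N0 p1m q1m by auto
  have r0l: "(p,r0) \<notin> l"
  proof
    assume h: "(p,r0) \<in> l"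
    then have "r0 = p1" using p1 r0m by auto
    moreover have "r0 = q1" using q1 r0m h by auto
    ultimately show False using pq by simp
  qed
  have vj: "valency j = 2"
  proof -
    have "{p1,r0} \<subseteq> {x. (a',x) \<in> j}" using p1m r0m by auto
    moreover have "p1 \<noteq> r0" using p1m r0l by auto
    ultimately have "2 \<le> card {x. (a',x) \<in> j}" by (intro two_le) auto
    thus ?thesis using le2[OF S(5), of a'] val_eq[OF S(5), of a'] by simp
  qed
  have vm: "valency m = 2"
  proof -
    have "{q1,r0} \<subseteq> {x. (x,b') \<in> m}" using q1m r0m by auto
    moreover have "q1 \<noteq> r0" using q1m r0l by auto
    ultimately have "2 \<le> card {x. (x,b') \<in> m}" by (intro two_le) auto
    moreover have "valency m \<le> 2" using qt S(6) unfolding quasi_thin_def by blast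
    ultimately show ?thesis using val_eq'[OF S(6), of b'] by simp
  qed
  have cL: "card L = 2"
  proof -
    have "{p1,q1} \<subseteq> L" using p1m q1m L_def by auto
    hence "2 \<le> card L" using pq by (intro two_le) auto
    thus ?thesis using le2[OF S(4), of p] L_def by simp
  qed
  have vl: "valency l = 2" using cL val_eq[OF S(4), of p] L_def by simp
  have Tall: "\<forall>a2\<in>I. card {x\<in>L. (a2,x) \<in> j} = 1"
  proof
    fix a2 assume "a2 \<in> I"
    hence "(p,a2) \<in> i" using I_def by simp
    hence "inum l (converse j) i = card {x. (p,x) \<in> l \<and> (x,a2) \<in> converse j}"
      using inum_eq[OF S(4) conv_in[OF S(5)] S(1)] by blast
    moreover have "inum l (converse j) i = card {x. (p,x) \<in> l \<and> (x,a) \<in> converse j}"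
      using inum_eq[OF S(4) conv_in[OF S(5)] S(1)] r(1) by blast
    ultimately show "card {x\<in>L. (a2,x) \<in> j} = 1" using cT(1) L_def by simp
  qed
  have Iall: "\<forall>x\<in>L. card {a2\<in>I. (a2,x) \<in> j} = inum i j l"
  proof
    fix x assume "x \<in> L"
    hence "(p,x) \<in> l" using L_def by simp
    thus "card {a2\<in>I. (a2,x) \<in> j} = inum i j l" using inum_eq[OF S(1) S(5) S(4)] I_def by simp
  qed
  have "card I = card L * inum i j l" by (rule DC) (use Tall Iall in simp_all)
  moreover have "card I \<le> 2" using le2[OF S(1), of p] I_def by simp
  moreover have "card I \<noteq> 0" using r(1) I_def by auto
  ultimately have cI2: "card I = 2 * inum i j l" and "card I \<le> 2" "card I \<noteq> 0" using cL by simp_all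
  hence ijl: "inum i j l = 1" by linarith
  hence cI: "card I = 2" using cI2 by simp
  have Uall: "\<forall>b2\<in>Nn. card {x\<in>L. (x,b2) \<in> m} = 1"
  proof
    fix b2 assume "b2 \<in> Nn"
    hence "(p,b2) \<in> n" using Nn_def by simp
    hence "inum l m n = card {x. (p,x) \<in> l \<and> (x,b2) \<in> m}"
      using inum_eq[OF S(4) S(6) S(3)] by blast
    moreover have "inum l m n = card {x. (p,x) \<in> l \<and> (x,b) \<in> m}"
      using inum_eq[OF S(4) S(6) S(3)] r(5) by blast
    ultimately show "card {x\<in>L. (x,b2) \<in> m} = 1" using cU(1) L_def by simp
  qed
  have Nall: "\<forall>x\<in>L. card {b2\<in>Nn. (x,b2) \<in> m} = inum n (converse m) l"
  proof
    fix x assume "x \<in> L"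
    hence "(p,x) \<in> l" using L_def by simp
    thus "card {b2\<in>Nn. (x,b2) \<in> m} = inum n (converse m) l"
      using inum_eq[OF S(3) conv_in[OF S(6)] S(4)] Nn_def by simp
  qed
  have "card Nn = card L * inum n (converse m) l" by (rule DC) (use Uall Nall in simp_all)
  moreover have "card Nn \<le> 2" using le2[OF S(3), of p] Nn_def by simp
  moreover have "card Nn \<noteq> 0" using r(5) Nn_def by auto
  ultimately have cN2: "card Nn = 2 * inum n (converse m) l" and "card Nn \<le> 2" "card Nn \<noteq> 0" using cL by simp_all
  hence nml: "inum n (converse m) l = 1" by linarith
  hence cN: "card Nn = 2" using cN2 by simp
  have lmn: "inum l m n = 1" using inum_eq[OF S(4) S(6) S(3) r(5)] cU(1) by simp
  have vi: "valency i = 2" using cI val_eq[OF S(1), of p] I_def by simp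
  have vn: "valency n = 2" using cN val_eq[OF S(3), of p] Nn_def by simp
  have u1: "\<And>x a2 a3. x \<in> L \<Longrightarrow> a2 \<in> I \<Longrightarrow> a3 \<in> I \<Longrightarrow> (a2,x) \<in> j \<Longrightarrow> (a3,x) \<in> j \<Longrightarrow> a2 = a3"
  proof -
    fix x a2 a3 assume h: "x \<in> L" "a2 \<in> I" "a3 \<in> I" "(a2,x) \<in> j" "(a3,x) \<in> j"
    have "card {a2\<in>I. (a2,x) \<in> j} = 1" using Iall ijl h(1) by simp
    thus "a2 = a3" by (rule card1_eq) (use h in simp_all)
  qed
  have u2: "\<And>x b2 b3. x \<in> L \<Longrightarrow> b2 \<in> Nn \<Longrightarrow> b3 \<in> Nn \<Longrightarrow> (x,b2) \<in> m \<Longrightarrow> (x,b3) \<in> m \<Longrightarrow> b2 = b3"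
  proof -
    fix x b2 b3 assume h: "x \<in> L" "b2 \<in> Nn" "b3 \<in> Nn" "(x,b2) \<in> m" "(x,b3) \<in> m"
    have "card {b2\<in>Nn. (x,b2) \<in> m} = 1" using Nall nml h(1) by simp
    thus "b2 = b3" by (rule card1_eq) (use h in simp_all)
  qed
  have tu: "\<And>a2 x y. a2 \<in> I \<Longrightarrow> x \<in> L \<Longrightarrow> y \<in> L \<Longrightarrow> (a2,x) \<in> j \<Longrightarrow> (a2,y) \<in> j \<Longrightarrow> x = y"
  proof -
    fix a2 x y assume h: "a2 \<in> I" "x \<in> L" "y \<in> L" "(a2,x) \<in> j" "(a2,y) \<in> j"
    have "card {x\<in>L. (a2,x) \<in> j} = 1" using Tall h(1) by simp
    thus "x = y" by (rule card1_eq) (use h in simp_all)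
  qed
  have uu: "\<And>b2 x y. b2 \<in> Nn \<Longrightarrow> x \<in> L \<Longrightarrow> y \<in> L \<Longrightarrow> (x,b2) \<in> m \<Longrightarrow> (y,b2) \<in> m \<Longrightarrow> x = y"
  proof -
    fix b2 x y assume h: "b2 \<in> Nn" "x \<in> L" "y \<in> L" "(x,b2) \<in> m" "(y,b2) \<in> m"
    have "card {x\<in>L. (x,b2) \<in> m} = 1" using Uall h(1) by simp
    thus "x = y" by (rule card1_eq) (use h in simp_all)
  qed
  have mem: "a \<in> I" "a' \<in> I" "b \<in> Nn" "b' \<in> Nn" "x0 \<in> L" "p1 \<in> L" "q1 \<in> L"
    using r x0 p1m q1m I_def Nn_def L_def by simp_all
  have Dall: "\<forall>b2\<in>Nn. card {a2\<in>I. (a2,b2) \<in> k} = inum i k n"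
  proof
    fix b2 assume "b2 \<in> Nn"
    hence "(p,b2) \<in> n" using Nn_def by simp
    thus "card {a2\<in>I. (a2,b2) \<in> k} = inum i k n" using inum_eq[OF S(1) S(2) S(3)] I_def by simp
  qed
  have D2: "inum i k n = 2"
  proof (rule ccontr)
    assume nD: "inum i k n \<noteq> 2"
    have "card {a2\<in>I. (a2,b) \<in> k} \<le> card I" by (rule card_mono) simp_all
    moreover have "card {a2\<in>I. (a2,b) \<in> k} \<noteq> 0" using mem r(3) by auto
    ultimately have D1: "inum i k n = 1" using Dall mem(3) cI nD by simp
    have Kall2: "\<forall>a2\<in>I. card {b2\<in>Nn. (a2,b2) \<in> k} = inum n (converse k) i"
    proof
      fix a2 assume "a2 \<in> I"
      hence "(p,a2) \<in> i" using I_def by simp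
      thus "card {b2\<in>Nn. (a2,b2) \<in> k} = inum n (converse k) i"
        using inum_eq[OF S(3) conv_in[OF S(2)] S(1)] Nn_def by simp
    qed
    have "card Nn = card I * inum n (converse k) i" by (rule DC) (use Dall D1 Kall2 in simp_all)
    hence nki: "inum n (converse k) i = 1" using cN cI by simp
    have u3: "\<And>b2 a2 a3. b2 \<in> Nn \<Longrightarrow> a2 \<in> I \<Longrightarrow> a3 \<in> I \<Longrightarrow> (a2,b2) \<in> k \<Longrightarrow> (a3,b2) \<in> k \<Longrightarrow> a2 = a3"
    proof -
      fix b2 a2 a3 assume h: "b2 \<in> Nn" "a2 \<in> I" "a3 \<in> I" "(a2,b2) \<in> k" "(a3,b2) \<in> k"
      have "card {a2\<in>I. (a2,b2) \<in> k} = 1" using Dall D1 h(1) by simp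
      thus "a2 = a3" by (rule card1_eq) (use h in simp_all)
    qed
    have u4: "\<And>a2 b2 b3. a2 \<in> I \<Longrightarrow> b2 \<in> Nn \<Longrightarrow> b3 \<in> Nn \<Longrightarrow> (a2,b2) \<in> k \<Longrightarrow> (a2,b3) \<in> k \<Longrightarrow> b2 = b3"
    proof -
      fix a2 b2 b3 assume h: "a2 \<in> I" "b2 \<in> Nn" "b3 \<in> Nn" "(a2,b2) \<in> k" "(a2,b3) \<in> k"
      have "card {b2\<in>Nn. (a2,b2) \<in> k} = 1" using Kall2 nki h(1) by simp
      thus "b2 = b3" by (rule card1_eq) (use h in simp_all)
    qed
    show False
    proof (cases "p1 = x0")
      case True
      have "a' = a" using u1[OF mem(5) mem(2) mem(1)] p1m(2) x0(2) True by simp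
      hence "b' = b" using u4[OF mem(1) mem(4) mem(3)] r(3,4) by simp
      hence "q1 = x0" using uu[OF mem(3) mem(7) mem(5)] q1m(2) x0(3) by simp
      thus False using True pq by simp
    next
      case F1: False
      show False
      proof (cases "q1 = x0")
        case True
        have "b' = b" using u2[OF mem(5) mem(4) mem(3)] q1m(2) x0(3) True by simp
        hence "a' = a" using u3[OF mem(3) mem(2) mem(1)] r(3,4) by simp
        hence "p1 = x0" using tu[OF mem(1) mem(6) mem(5)] p1m(2) x0(2) by simp
        thus False using F1 by simp
      next
        case F2: False
        have "card {x0,p1,q1} \<le> card L" using mem by (intro card_mono) auto
        moreover have "card {x0,p1,q1} = 3" using F1 F2 pq by auto
        ultimately show False using cL by simp
      qed
    qed
  qed
  have cp: "cprod S (converse i) n = {k}"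
  proof
    show "{k} \<subseteq> cprod S (converse i) n"
    proof -
      have "inum (converse i) n k = card {o'. (a,o') \<in> converse i \<and> (o',b) \<in> n}"
        using inum_eq[OF conv_in[OF S(1)] S(3) S(2) r(3)] .
      moreover have "card {o'. (a,o') \<in> converse i \<and> (o',b) \<in> n} > 0"
        using r(1) r(5) by (subst card_gt_0_iff) auto
      ultimately show ?thesis unfolding cprod_def using S(2) by simp
    qed
  next
    show "cprod S (converse i) n \<subseteq> {k}"
    proof
      fix c assume c: "c \<in> cprod S (converse i) n"
      hence cS: "c \<in> S" and cpos: "inum (converse i) n c > 0" unfolding cprod_def by simp_all
      obtain c1 c2 where cc: "(c1,c2) \<in> c" using nonempty[OF cS] by auto
      have "card {o'. (c1,o') \<in> converse i \<and> (o',c2) \<in> n} > 0"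
        using inum_eq[OF conv_in[OF S(1)] S(3) cS cc] cpos by simp
      then obtain o' where o': "(o',c1) \<in> i" "(o',c2) \<in> n" by (auto simp: card_gt_0_iff)
      have "card {a2. (o',a2) \<in> i \<and> (a2,c2) \<in> k} = 2" using inum_eq[OF S(1) S(2) S(3) o'(2)] D2 by simp
      hence "{a2. (o',a2) \<in> i \<and> (a2,c2) \<in> k} = {x. (o',x) \<in> i}"
        by (intro card2_eq[OF S(1)]) auto
      hence "(c1,c2) \<in> k" using o'(1) by blast
      hence "c = k" using uniq_rel[OF cS S(2) cc] by simp
      thus "c \<in> {k}" by simp
    qed
  qed
  show ?thesis
    apply (rule bexI[where x=i], rule bexI[where x=j], rule bexI[where x=l], rule bexI[where x=m], rule bexI[where x=n])
    using vi vj vl vm vn ijl lmn cp S by simp_all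
qed

end


context qts begin

lemma core:
  assumes noconf: "\<not> (\<exists>u\<in>S. \<exists>v\<in>S. \<exists>w\<in>S. \<exists>y\<in>S. \<exists>z\<in>S.
          valency u = 2 \<and> valency v = 2 \<and> valency w = 2 \<and> valency y = 2 \<and> valency z = 2 \<and>
          inum u v w = 1 \<and> inum w y z = 1 \<and> card (cprod S (converse u) z) = 1)"
  and S: "l \<in> S" "j \<in> S" "m \<in> S"
  and ce: "\<forall>r\<in>S. ((p,a) \<in> r \<longleftrightarrow> (p,a') \<in> r) \<and> ((a,b) \<in> r \<longleftrightarrow> (a',b') \<in> r) \<and> ((p,b) \<in> r \<longleftrightarrow> (p,b') \<in> r)"
  shows "card {x. (p,x) \<in> l \<and> (a,x) \<in> j \<and> (x,b) \<in> m} = card {x. (p,x) \<in> l \<and> (a',x) \<in> j \<and> (x,b') \<in> m}"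
proof -
  obtain i where i: "i \<in> S" "(p,a) \<in> i" using ex_rel by blast
  obtain k where k: "k \<in> S" "(a,b) \<in> k" using ex_rel by blast
  obtain n where n: "n \<in> S" "(p,b) \<in> n" using ex_rel by blast
  have i': "(p,a') \<in> i" and k': "(a',b') \<in> k" and n': "(p,b') \<in> n" using ce i k n by blast+
  define T1 where "T1 = {x. (p,x) \<in> l \<and> (a,x) \<in> j}"
  define T2 where "T2 = {x. (p,x) \<in> l \<and> (a',x) \<in> j}"
  define U1 where "U1 = {x. (p,x) \<in> l \<and> (x,b) \<in> m}"
  define U2 where "U2 = {x. (p,x) \<in> l \<and> (x,b') \<in> m}"
  define V1 where "V1 = {x. (a,x) \<in> j \<and> (x,b) \<in> m}"
  define V2 where "V2 = {x. (a',x) \<in> j \<and> (x,b') \<in> m}"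
  define N1 where "N1 = {x. (p,x) \<in> l \<and> (a,x) \<in> j \<and> (x,b) \<in> m}"
  define N2 where "N2 = {x. (p,x) \<in> l \<and> (a',x) \<in> j \<and> (x,b') \<in> m}"
  have cT: "card T1 = card T2"
    using inum_eq[OF S(1) conv_in[OF S(2)] i(1) i(2)] inum_eq[OF S(1) conv_in[OF S(2)] i(1) i'] T1_def T2_def by simp
  have cU: "card U1 = card U2"
    using inum_eq[OF S(1) S(3) n(1) n(2)] inum_eq[OF S(1) S(3) n(1) n'] U1_def U2_def by simp
  have cV: "card V1 = card V2"
    using inum_eq[OF S(2) S(3) k(1) k(2)] inum_eq[OF S(2) S(3) k(1) k'] V1_def V2_def by simp
  have bT: "card T1 \<le> 2"
  proof -
    have "card T1 \<le> card {x. (p,x) \<in> l}" unfolding T1_def by (rule card_mono) auto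
    thus ?thesis using le2[OF S(1), of p] by simp
  qed
  have bU: "card U1 \<le> 2"
  proof -
    have "card U1 \<le> card {x. (p,x) \<in> l}" unfolding U1_def by (rule card_mono) auto
    thus ?thesis using le2[OF S(1), of p] by simp
  qed
  have bV: "card V1 \<le> 2"
  proof -
    have "card V1 \<le> card {x. (a,x) \<in> j}" unfolding V1_def by (rule card_mono) auto
    thus ?thesis using le2[OF S(2), of a] by simp
  qed
  have N1T: "N1 = T1 \<inter> U1" and N2T: "N2 = T2 \<inter> U2" unfolding N1_def N2_def T1_def T2_def U1_def U2_def by auto
  have N1V: "N1 = T1 \<inter> V1" and N2V: "N2 = T2 \<inter> V2" unfolding N1_def N2_def T1_def T2_def V1_def V2_def by auto
  have "card N1 = card N2"
  proof (cases "card T1 = 0 \<or> card U1 = 0 \<or> card V1 = 0")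
    case True
    then have "T1 = {} \<and> T2 = {} \<or> U1 = {} \<and> U2 = {} \<or> V1 = {} \<and> V2 = {}"
      using cT cU cV by (auto simp del: card_0_eq simp add: card_eq_0_iff)
    then show ?thesis using N1T N2T N1V N2V by auto
  next
    case F0: False
    show ?thesis
    proof (cases "card T1 = 2")
      case True
      have "T1 = {x. (p,x) \<in> l}" by (rule card2_eq[OF S(1)]) (use True T1_def in auto)
      moreover have "T2 = {x. (p,x) \<in> l}" by (rule card2_eq[OF S(1)]) (use True cT T2_def in auto)
      ultimately have "N1 = U1" "N2 = U2" using N1T N2T U1_def U2_def by auto
      then show ?thesis using cU by simp
    next
      case F1: False
      show ?thesis
      proof (cases "card U1 = 2")
        case True
        have "U1 = {x. (p,x) \<in> l}" by (rule card2_eq[OF S(1)]) (use True U1_def in auto)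
        moreover have "U2 = {x. (p,x) \<in> l}" by (rule card2_eq[OF S(1)]) (use True cU U2_def in auto)
        ultimately have "N1 = T1" "N2 = T2" using N1T N2T T1_def T2_def by auto
        then show ?thesis using cT by simp
      next
        case F2: False
        show ?thesis
        proof (cases "card V1 = 2")
          case True
          have "V1 = {x. (a,x) \<in> j}" by (rule card2_eq[OF S(2)]) (use True V1_def in auto)
          moreover have "V2 = {x. (a',x) \<in> j}" by (rule card2_eq[OF S(2)]) (use True cV V2_def in auto)
          ultimately have "N1 = T1" "N2 = T2" using N1V N2V T1_def T2_def by auto
          then show ?thesis using cT by simp
        next
          case F3: False
          have c1: "card T1 = 1" "card U1 = 1" "card V1 = 1" using F0 F1 F2 F3 bT bU bV by (simp_all del: card_0_eq)
          have c2: "card T2 = 1" "card U2 = 1" "card V2 = 1" using c1 cT cU cV by simp_all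
          have bN1: "card N1 \<le> 1" using c1 N1T card_mono[of T1 N1] by (simp add: T1_def)
          have bN2: "card N2 \<le> 1" using c2 N2T card_mono[of T2 N2] by (simp add: T2_def)
          show ?thesis
          proof (rule ccontr)
            assume ne: "card N1 \<noteq> card N2"
            show False
            proof (cases "card N1 = 1")
              case True
              then obtain x0 where "x0 \<in> N1" by (auto simp: card_Suc_eq)
              hence x0: "(p,x0) \<in> l" "(a,x0) \<in> j" "(x0,b) \<in> m" using N1_def by simp_all
              have "card N2 = 0" using ne True bN2 by linarith
              hence "N2 = {}" using card_eq_0_iff[of N2] by simp
              hence N0: "{x. (p,x) \<in> l \<and> (a',x) \<in> j \<and> (x,b') \<in> m} = {}" using N2_def by simp
              show False using fail[OF i(1) k(1) n(1) S(1) S(2) S(3) i(2) i' k(2) k' n(2) n' _ _ _ _ _ _ x0 N0]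
                c1 c2 noconf T1_def T2_def U1_def U2_def V1_def V2_def by simp
            next
              case False
              hence "card N2 = 1" "card N1 = 0" using ne bN1 bN2 by linarith+
              then obtain x0 where "x0 \<in> N2" by (auto simp: card_Suc_eq)
              hence x0: "(p,x0) \<in> l" "(a',x0) \<in> j" "(x0,b') \<in> m" using N2_def by simp_all
              have "N1 = {}" using \<open>card N1 = 0\<close> card_eq_0_iff[of N1] by simp
              hence N0: "{x. (p,x) \<in> l \<and> (a,x) \<in> j \<and> (x,b) \<in> m} = {}" using N1_def by simp
              show False using fail[OF i(1) k(1) n(1) S(1) S(2) S(3) i' i(2) k' k(2) n' n(2) _ _ _ _ _ _ x0 N0]
                c1 c2 noconf T1_def T2_def U1_def U2_def V1_def V2_def by simp
            qed
          qed
        qed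
      qed
    qed
  qed
  thus ?thesis using N1_def N2_def by simp
qed

end


definition ind :: "'x \<Rightarrow> ('x \<times> 'x) set \<Rightarrow> ('x \<times> 'x) set \<Rightarrow> ('x \<times> 'x) set \<Rightarrow> ('x, 'f::field) mat" where
  "ind p i j l = (\<lambda>a b. if (p,a) \<in> i \<and> (a,b) \<in> j \<and> (p,b) \<in> l then 1 else 0)"

lemma sumL: "(\<Sum>c\<in>(UNIV::'x::finite set). (if a = c \<and> P then 1 else 0) * (f c :: 'f::field)) = (if P then f a else 0)"
proof -
  have "\<And>c. (if a = c \<and> P then 1 else 0) * f c = (if a = c then (if P then f a else 0) else 0)" by auto
  hence "(\<Sum>c\<in>UNIV. (if a = c \<and> P then 1 else 0) * f c) = (\<Sum>c\<in>UNIV. (if a = c then (if P then f a else 0) else 0))"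
    by simp
  also have "\<dots> = (if P then f a else 0)" by (simp add: sum.delta sum.delta')
  finally show ?thesis .
qed

lemma sumR: "(\<Sum>c\<in>(UNIV::'x::finite set). (f c :: 'f::field) * (if c = b \<and> P c then 1 else 0)) = (if P b then f b else 0)"
proof -
  have "\<And>c. f c * (if c = b \<and> P c then 1 else 0) = (if c = b then (if P b then f b else 0) else 0)" by auto
  hence "(\<Sum>c\<in>UNIV. f c * (if c = b \<and> P c then 1 else 0)) = (\<Sum>c\<in>UNIV. (if c = b then (if P b then f b else 0) else 0))"
    by simp
  also have "\<dots> = (if P b then f b else 0)" by (simp add: sum.delta sum.delta')
  finally show ?thesis .
qed

lemma gen_eq: "mmult (mmult (dual_idem p i) (adj j)) (dual_idem p l) = (ind p i j l :: ('x::finite, 'f::field) mat)"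
proof (intro ext)
  fix a b :: 'x
  have e1: "\<And>a c. mmult (dual_idem p i) (adj j) a c = (if (p,a) \<in> i \<and> (a,c) \<in> j then 1 else (0::'f))"
  proof -
    fix a c :: 'x
    show "mmult (dual_idem p i) (adj j) a c = (if (p,a) \<in> i \<and> (a,c) \<in> j then 1 else (0::'f))"
      unfolding mmult_def dual_idem_def adj_def by (simp only: sumL) simp
  qed
  have "mmult (mmult (dual_idem p i) (adj j)) (dual_idem p l) a b
      = (\<Sum>c\<in>UNIV. mmult (dual_idem p i) (adj j) a c * (dual_idem p l c b :: 'f))"
    by (simp only: mmult_def[of "mmult (dual_idem p i) (adj j)"])
  also have "\<dots> = (\<Sum>c\<in>UNIV. (if (p,a) \<in> i \<and> (a,c) \<in> j then 1 else (0::'f)) * (if c = b \<and> (p,c) \<in> l then 1 else 0))"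
    unfolding e1 by (simp only: dual_idem_def)
  also have "\<dots> = ind p i j l a b" by (simp only: sumR) (simp add: ind_def)
  finally show "mmult (mmult (dual_idem p i) (adj j)) (dual_idem p l) a b = (ind p i j l a b :: 'f)" .
qed

lemma sum_prod_ind: "(\<Sum>c\<in>(UNIV::'x::finite set). (if P c then 1 else 0) * (if Q c then 1 else (0::'f::field))) = of_nat (card {c. P c \<and> Q c})"
proof -
  have "(\<Sum>c\<in>(UNIV::'x set). (if P c then 1 else 0) * (if Q c then 1 else (0::'f))) = (\<Sum>c\<in>(UNIV::'x set). of_bool (P c \<and> Q c))"
    by (intro sum.cong) auto
  also have "\<dots> = of_nat (card {c. P c \<and> Q c})" by simp
  finally show ?thesis .
qed

context qs begin

definition ceq :: "'x \<Rightarrow> 'x \<Rightarrow> 'x \<Rightarrow> 'x \<Rightarrow> 'x \<Rightarrow> bool" where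
  "ceq p a b a' b' \<longleftrightarrow> (\<forall>r\<in>S. ((p,a) \<in> r \<longleftrightarrow> (p,a') \<in> r) \<and> ((a,b) \<in> r \<longleftrightarrow> (a',b') \<in> r) \<and> ((p,b) \<in> r \<longleftrightarrow> (p,b') \<in> r))"

definition CC :: "'x \<Rightarrow> ('x, 'f::field) mat set" where
  "CC p = {M. \<forall>a b a' b'. ceq p a b a' b' \<longrightarrow> M a b = M a' b'}"

definition GG :: "'x \<Rightarrow> ('x, 'f::field) mat set" where
  "GG p = {ind p i j l | i j l. i \<in> S \<and> j \<in> S \<and> l \<in> S}"

lemma GG_eq: "{mmult (mmult (dual_idem p i) (adj j)) (dual_idem p l) :: ('x,'f::field) mat | i j l. i \<in> S \<and> j \<in> S \<and> l \<in> S} = GG p"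
  unfolding GG_def gen_eq ..

lemma finGG: "finite (GG p)"
proof -
  have "GG p \<subseteq> (\<lambda>(i,j,l). ind p i j l) ` (S \<times> S \<times> S)"
  proof
    fix g assume "g \<in> GG p"
    then obtain i j l where "i \<in> S" "j \<in> S" "l \<in> S" "g = ind p i j l" unfolding GG_def by blast
    thus "g \<in> (\<lambda>(i,j,l). ind p i j l) ` (S \<times> S \<times> S)" by (intro image_eqI[where x="(i,j,l)"]) auto
  qed
  thus ?thesis by (rule finite_subset) (simp add: finS)
qed

lemma ind_ceq: assumes "i \<in> S" "j \<in> S" "l \<in> S" "ceq p a b a' b'" shows "ind p i j l a b = ind p i j l a' b'"
  using assms unfolding ceq_def ind_def by simp

lemma span_sub: "mspan (GG p) \<subseteq> (CC p :: ('x,'f::field) mat set)"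
proof
  fix M :: "('x,'f) mat" assume "M \<in> mspan (GG p)"
  then obtain c F where F: "finite F" "F \<subseteq> GG p" "M = (\<lambda>a b. \<Sum>g\<in>F. c g * g a b)" unfolding mspan_def by blast
  show "M \<in> CC p" unfolding CC_def
  proof (intro CollectI allI impI)
    fix a b a' b' assume ce: "ceq p a b a' b'"
    have "\<forall>g\<in>F. g a b = g a' b'"
    proof
      fix g assume "g \<in> F"
      then obtain i j l where "i \<in> S" "j \<in> S" "l \<in> S" "g = ind p i j l" using F(2) unfolding GG_def by blast
      thus "g a b = g a' b'" using ind_ceq ce by simp
    qed
    hence "(\<Sum>g\<in>F. c g * g a b) = (\<Sum>g\<in>F. c g * g a' b')" by (intro sum.cong) simp_all
    thus "M a b = M a' b'" using F(3) by simp
  qed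
qed

lemma CC_sub: "(CC p :: ('x,'f::field) mat set) \<subseteq> mspan (GG p)"
proof
  fix M :: "('x,'f) mat" assume M: "M \<in> CC p"
  define pick where "pick = (\<lambda>g::('x,'f) mat. SOME ab. g (fst ab) (snd ab) = 1)"
  define c where "c = (\<lambda>g. M (fst (pick g)) (snd (pick g)))"
  have "M = (\<lambda>a b. \<Sum>g\<in>GG p. c g * g a b)"
  proof (intro ext)
    fix a b
    obtain i where i: "i \<in> S" "(p,a) \<in> i" using ex_rel by blast
    obtain j where j: "j \<in> S" "(a,b) \<in> j" using ex_rel by blast
    obtain l where l: "l \<in> S" "(p,b) \<in> l" using ex_rel by blast
    define g0 where "g0 = (ind p i j l :: ('x,'f) mat)"
    have g0G: "g0 \<in> GG p" unfolding g0_def GG_def using i j l by blast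
    have g0ab: "g0 a b = 1" unfolding g0_def ind_def using i j l by simp
    have others: "\<forall>g\<in>GG p - {g0}. g a b = 0"
    proof
      fix g assume g: "g \<in> GG p - {g0}"
      then obtain i' j' l' where S': "i' \<in> S" "j' \<in> S" "l' \<in> S" and gi: "g = ind p i' j' l'" unfolding GG_def by blast
      show "g a b = 0"
      proof (rule ccontr)
        assume "g a b \<noteq> 0"
        hence "(p,a) \<in> i'" "(a,b) \<in> j'" "(p,b) \<in> l'" using gi unfolding ind_def by (auto split: if_splits)
        hence "i' = i" "j' = j" "l' = l" using uniq_rel S' i j l by blast+
        thus False using g gi g0_def by simp
      qed
    qed
    have "(\<Sum>g\<in>GG p. c g * g a b) = c g0 * g0 a b + (\<Sum>g\<in>GG p - {g0}. c g * g a b)"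
      by (rule sum.remove[OF finGG g0G])
    also have "(\<Sum>g\<in>GG p - {g0}. c g * g a b) = 0" using others by (intro sum.neutral) simp
    finally have s: "(\<Sum>g\<in>GG p. c g * g a b) = c g0" using g0ab by simp
    have "\<exists>ab. g0 (fst ab) (snd ab) = 1" using g0ab by (intro exI[of _ "(a,b)"]) simp
    hence "g0 (fst (pick g0)) (snd (pick g0)) = 1" unfolding pick_def by (rule someI_ex)
    then obtain a0 b0 where ab0: "pick g0 = (a0,b0)" "g0 a0 b0 = 1" by (metis prod.collapse)
    hence r0: "(p,a0) \<in> i" "(a0,b0) \<in> j" "(p,b0) \<in> l" unfolding g0_def ind_def by (auto split: if_splits)
    have "ceq p a0 b0 a b" unfolding ceq_def
      using r0 i j l uniq_rel by blast
    hence "M a0 b0 = M a b" using M unfolding CC_def by blast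
    thus "M a b = (\<Sum>g\<in>GG p. c g * g a b)" using s ab0 c_def by simp
  qed
  thus "M \<in> mspan (GG p)" unfolding mspan_def using finGG by blast
qed

lemma span_eq: "mspan (GG p) = (CC p :: ('x,'f::field) mat set)"
  using span_sub CC_sub by blast

end



context qs begin

definition rel :: "'x \<Rightarrow> 'x \<Rightarrow> ('x \<times> 'x) set" where
  "rel p q = (THE r. r \<in> S \<and> (p,q) \<in> r)"

lemma rel_prop: "rel p q \<in> S \<and> (p,q) \<in> rel p q"
proof -
  obtain r where r: "r \<in> S" "(p,q) \<in> r" using ex_rel by blast
  have "rel p q = r" unfolding rel_def
  proof (rule the_equality)
    show "r \<in> S \<and> (p,q) \<in> r" using r by simp
  next
    fix x assume "x \<in> S \<and> (p,q) \<in> x"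
    thus "x = r" using uniq_rel[of x r p q] r by simp
  qed
  thus ?thesis using r by simp
qed

lemma rel_iff: assumes "r \<in> S" shows "rel p q = r \<longleftrightarrow> (p,q) \<in> r"
proof
  assume "rel p q = r" thus "(p,q) \<in> r" using rel_prop[of p q] by simp
next
  assume "(p,q) \<in> r" thus "rel p q = r" using uniq_rel[of "rel p q" r p q] rel_prop[of p q] assms by simp
qed

end

context qts begin

lemma mult_CC:
  fixes M N :: "('x,'f::field) mat"
  assumes noconf: "\<not> (\<exists>u\<in>S. \<exists>v\<in>S. \<exists>w\<in>S. \<exists>y\<in>S. \<exists>z\<in>S.
          valency u = 2 \<and> valency v = 2 \<and> valency w = 2 \<and> valency y = 2 \<and> valency z = 2 \<and>
          inum u v w = 1 \<and> inum w y z = 1 \<and> card (cprod S (converse u) z) = 1)"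
  and M: "M \<in> CC p" and N: "N \<in> CC p"
  shows "mmult M N \<in> CC p"
  unfolding CC_def
proof (intro CollectI allI impI)
  fix a b a' b' assume ce: "ceq p a b a' b'"
  define T where "T = S \<times> S \<times> S"
  define t1 where "t1 = (\<lambda>x. (rel p x, rel a x, rel x b))"
  define t2 where "t2 = (\<lambda>x. (rel p x, rel a' x, rel x b'))"
  have fT: "finite T" unfolding T_def using finS by simp
  have i1: "t1 ` UNIV \<subseteq> T" unfolding t1_def T_def using rel_prop by auto
  have i2: "t2 ` UNIV \<subseteq> T" unfolding t2_def T_def using rel_prop by auto
  have s1: "mmult M N a b = (\<Sum>t\<in>T. \<Sum>x\<in>{x. x \<in> UNIV \<and> t1 x = t}. M a x * N x b)"
    unfolding mmult_def using sum.group[OF finite fT i1, of "\<lambda>x. M a x * N x b"] by simp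
  have s2: "mmult M N a' b' = (\<Sum>t\<in>T. \<Sum>x\<in>{x. x \<in> UNIV \<and> t2 x = t}. M a' x * N x b')"
    unfolding mmult_def using sum.group[OF finite fT i2, of "\<lambda>x. M a' x * N x b'"] by simp
  have "(\<Sum>t\<in>T. \<Sum>x\<in>{x. x \<in> UNIV \<and> t1 x = t}. M a x * N x b) = (\<Sum>t\<in>T. \<Sum>x\<in>{x. x \<in> UNIV \<and> t2 x = t}. M a' x * N x b')"
  proof (rule sum.cong[OF refl])
    fix t assume "t \<in> T"
    then obtain l j m where t: "t = (l,j,m)" and S: "l \<in> S" "j \<in> S" "m \<in> S" unfolding T_def by auto
    have X1: "{x. x \<in> UNIV \<and> t1 x = t} = {x. (p,x) \<in> l \<and> (a,x) \<in> j \<and> (x,b) \<in> m}"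
      unfolding t1_def t using rel_iff[OF S(1)] rel_iff[OF S(2)] rel_iff[OF S(3)] by auto
    have X2: "{x. x \<in> UNIV \<and> t2 x = t} = {x. (p,x) \<in> l \<and> (a',x) \<in> j \<and> (x,b') \<in> m}"
      unfolding t2_def t using rel_iff[OF S(1)] rel_iff[OF S(2)] rel_iff[OF S(3)] by auto
    have ce': "\<forall>r\<in>S. ((p,a) \<in> r \<longleftrightarrow> (p,a') \<in> r) \<and> ((a,b) \<in> r \<longleftrightarrow> (a',b') \<in> r) \<and> ((p,b) \<in> r \<longleftrightarrow> (p,b') \<in> r)"
      using ce unfolding ceq_def .
    have cc: "card {x. (p,x) \<in> l \<and> (a,x) \<in> j \<and> (x,b) \<in> m} = card {x. (p,x) \<in> l \<and> (a',x) \<in> j \<and> (x,b') \<in> m}"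
      by (rule core[OF noconf S ce'])
    show "(\<Sum>x\<in>{x. x \<in> UNIV \<and> t1 x = t}. M a x * N x b) = (\<Sum>x\<in>{x. x \<in> UNIV \<and> t2 x = t}. M a' x * N x b')"
      unfolding X1 X2
    proof (rule sum_eq_const)
      show "\<forall>x\<in>{x. (p,x) \<in> l \<and> (a,x) \<in> j \<and> (x,b) \<in> m}. \<forall>y\<in>{x. (p,x) \<in> l \<and> (a',x) \<in> j \<and> (x,b') \<in> m}.
              M a x * N x b = M a' y * N y b'"
      proof (intro ballI)
        fix x y assume x: "x \<in> {x. (p,x) \<in> l \<and> (a,x) \<in> j \<and> (x,b) \<in> m}" and y: "y \<in> {x. (p,x) \<in> l \<and> (a',x) \<in> j \<and> (x,b') \<in> m}"
        have "ceq p a x a' y" unfolding ceq_def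
        proof
          fix r assume r: "r \<in> S"
          have "(a,x) \<in> r \<longleftrightarrow> r = j" using uniq_rel[OF r S(2), of a x] x r by auto
          moreover have "(a',y) \<in> r \<longleftrightarrow> r = j" using uniq_rel[OF r S(2), of a' y] y r by auto
          moreover have "(p,x) \<in> r \<longleftrightarrow> r = l" using uniq_rel[OF r S(1), of p x] x r by auto
          moreover have "(p,y) \<in> r \<longleftrightarrow> r = l" using uniq_rel[OF r S(1), of p y] y r by auto
          ultimately show "((p,a) \<in> r \<longleftrightarrow> (p,a') \<in> r) \<and> ((a,x) \<in> r \<longleftrightarrow> (a',y) \<in> r) \<and> ((p,x) \<in> r \<longleftrightarrow> (p,y) \<in> r)"
            using ce' r by simp
        qed
        hence "M a x = M a' y" using M unfolding CC_def by blast
        moreover have "ceq p x b y b'" unfolding ceq_def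
        proof
          fix r assume r: "r \<in> S"
          have "(x,b) \<in> r \<longleftrightarrow> r = m" using uniq_rel[OF r S(3), of x b] x r by auto
          moreover have "(y,b') \<in> r \<longleftrightarrow> r = m" using uniq_rel[OF r S(3), of y b'] y r by auto
          moreover have "(p,x) \<in> r \<longleftrightarrow> r = l" using uniq_rel[OF r S(1), of p x] x r by auto
          moreover have "(p,y) \<in> r \<longleftrightarrow> r = l" using uniq_rel[OF r S(1), of p y] y r by auto
          ultimately show "((p,x) \<in> r \<longleftrightarrow> (p,y) \<in> r) \<and> ((x,b) \<in> r \<longleftrightarrow> (y,b') \<in> r) \<and> ((p,b) \<in> r \<longleftrightarrow> (p,b') \<in> r)"
            using ce' r by simp
        qed
        hence "N x b = N y b'" using N unfolding CC_def by blast
        ultimately show "M a x * N x b = M a' y * N y b'" by simp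
      qed
    qed (use cc in simp_all)
  qed
  thus "mmult M N a b = mmult M N a' b'" using s1 s2 by simp
qed

lemma CC_alg:
  assumes noconf: "\<not> (\<exists>u\<in>S. \<exists>v\<in>S. \<exists>w\<in>S. \<exists>y\<in>S. \<exists>z\<in>S.
          valency u = 2 \<and> valency v = 2 \<and> valency w = 2 \<and> valency y = 2 \<and> valency z = 2 \<and>
          inum u v w = 1 \<and> inum w y z = 1 \<and> card (cprod S (converse u) z) = 1)"
  shows "unital_subalgebra (CC p :: ('x,'f::field) mat set)"
  unfolding unital_subalgebra_def
proof (intro conjI ballI allI)
  fix M N :: "('x,'f) mat" assume "M \<in> CC p" "N \<in> CC p"
  thus "(\<lambda>a b. M a b + N a b) \<in> CC p" unfolding CC_def by auto
next
  fix c :: 'f and M :: "('x,'f) mat" assume "M \<in> CC p"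
  thus "(\<lambda>a b. c * M a b) \<in> CC p" unfolding CC_def by auto
next
  show "(\<lambda>a b. 0) \<in> (CC p :: ('x,'f) mat set)" unfolding CC_def by simp
next
  show "mone \<in> (CC p :: ('x,'f) mat set)" unfolding CC_def mone_def
  proof (intro CollectI allI impI)
    fix a b a' b' assume "ceq p a b a' b'"
    hence "((p,a) \<in> Id \<longleftrightarrow> (p,a') \<in> Id) \<and> ((a,b) \<in> Id \<longleftrightarrow> (a',b') \<in> Id) \<and> ((p,b) \<in> Id \<longleftrightarrow> (p,b') \<in> Id)"
      unfolding ceq_def using Id_in by (rule bspec)
    hence "(a,b) \<in> Id \<longleftrightarrow> (a',b') \<in> Id" by (elim conjE) assumption
    thus "(if a = b then 1 else (0::'f)) = (if a' = b' then 1 else 0)" by simp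
  qed
next
  fix M N :: "('x,'f) mat" assume "M \<in> CC p" "N \<in> CC p"
  thus "mmult M N \<in> CC p" using mult_CC[OF noconf] by blast
qed

end


context qts begin

lemma conf_notTR:
  assumes uS: "u \<in> S" "v \<in> S" "w \<in> S" "y \<in> S" "z \<in> S"
  and vals: "valency u = 2" "valency z = 2"
  and i1: "inum u v w = 1" and i2: "inum w y z = 1" and cp: "card (cprod S (converse u) z) = 1"
  shows "\<not> unital_subalgebra (mspan (GG p) :: ('x,'f::field) mat set)"
proof
  assume US: "unital_subalgebra (mspan (GG p) :: ('x,'f) mat set)"
  define M1 where "M1 = (ind p u v w :: ('x,'f) mat)"
  define M2 where "M2 = (ind p w y z :: ('x,'f) mat)"
  have "M1 \<in> CC p" unfolding CC_def M1_def using ind_ceq[OF uS(1) uS(2) uS(3)] by blast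
  hence m1: "M1 \<in> mspan (GG p)" using span_eq by blast
  have "M2 \<in> CC p" unfolding CC_def M2_def using ind_ceq[OF uS(3) uS(4) uS(5)] by blast
  hence m2: "M2 \<in> mspan (GG p)" using span_eq by blast
  have "mmult M1 M2 \<in> mspan (GG p)" using US m1 m2 unfolding unital_subalgebra_def by blast
  hence P: "mmult M1 M2 \<in> CC p" using span_eq by blast
  have "card {x. (p,x) \<in> z} = 2" using vals(2) val_eq[OF uS(5), of p] by simp
  then obtain b where b: "(p,b) \<in> z" by (metis (no_types, lifting) card_2_iff insertI1 mem_Collect_eq)
  have "card {a. (p,a) \<in> w \<and> (a,b) \<in> y} = 1" using inum_eq[OF uS(3) uS(4) uS(5) b] i2 by simp
  then obtain a0 where a0s: "{a. (p,a) \<in> w \<and> (a,b) \<in> y} = {a0}" using card_1_singleton_iff by (metis One_nat_def)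
  hence a0: "(p,a0) \<in> w" "(a0,b) \<in> y" by auto
  have "card {x. (p,x) \<in> u \<and> (x,a0) \<in> v} = 1" using inum_eq[OF uS(1) uS(2) uS(3) a0(1)] i1 by simp
  then obtain x1 where x1s: "{x. (p,x) \<in> u \<and> (x,a0) \<in> v} = {x1}" using card_1_singleton_iff by (metis One_nat_def)
  hence x1: "(p,x1) \<in> u" "(x1,a0) \<in> v" by auto
  have "card {x. (p,x) \<in> u} = 2" using vals(1) val_eq[OF uS(1), of p] by simp
  then obtain x2 where x2: "(p,x2) \<in> u" "x2 \<noteq> x1" unfolding card_2_iff by blast
  have nx2: "(x2,a0) \<notin> v" using x1s x2 by auto
  have mm: "\<And>x. mmult M1 M2 x b = of_nat (card {a. ((p,x) \<in> u \<and> (x,a) \<in> v \<and> (p,a) \<in> w) \<and> ((p,a) \<in> w \<and> (a,b) \<in> y \<and> (p,b) \<in> z)})"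
    unfolding mmult_def M1_def M2_def ind_def by (rule sum_prod_ind)
  have e1: "{a. ((p,x1) \<in> u \<and> (x1,a) \<in> v \<and> (p,a) \<in> w) \<and> ((p,a) \<in> w \<and> (a,b) \<in> y \<and> (p,b) \<in> z)} = {a0}"
    using a0s x1 a0 b by auto
  have v1: "mmult M1 M2 x1 b = 1" unfolding mm e1 by simp
  have e2: "{a. ((p,x2) \<in> u \<and> (x2,a) \<in> v \<and> (p,a) \<in> w) \<and> ((p,a) \<in> w \<and> (a,b) \<in> y \<and> (p,b) \<in> z)} = {}"
    using a0s nx2 by auto
  have v2: "mmult M1 M2 x2 b = 0" unfolding mm e2 by simp
  obtain c where cs: "cprod S (converse u) z = {c}" using cp card_1_singleton_iff by (metis One_nat_def)
  have inc: "\<And>x. (p,x) \<in> u \<Longrightarrow> (x,b) \<in> c"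
  proof -
    fix x assume px: "(p,x) \<in> u"
    have rS: "rel x b \<in> S" and rx: "(x,b) \<in> rel x b" using rel_prop by simp_all
    have "inum (converse u) z (rel x b) = card {o'. (x,o') \<in> converse u \<and> (o',b) \<in> z}"
      by (rule inum_eq[OF conv_in[OF uS(1)] uS(5) rS rx])
    moreover have "card {o'. (x,o') \<in> converse u \<and> (o',b) \<in> z} > 0"
      using px b by (subst card_gt_0_iff) auto
    ultimately have "rel x b \<in> cprod S (converse u) z" unfolding cprod_def using rS by simp
    hence "rel x b = c" using cs by simp
    thus "(x,b) \<in> c" using rx by simp
  qed
  have cb: "(x1,b) \<in> c" "(x2,b) \<in> c" using inc x1(1) x2(1) by simp_all
  have cS: "c \<in> S" using cs unfolding cprod_def by blast
  have "ceq p x1 b x2 b" unfolding ceq_def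
  proof
    fix r assume r: "r \<in> S"
    have "(p,x1) \<in> r \<longleftrightarrow> r = u" using uniq_rel[OF r uS(1), of p x1] x1 r by auto
    moreover have "(p,x2) \<in> r \<longleftrightarrow> r = u" using uniq_rel[OF r uS(1), of p x2] x2 r by auto
    moreover have "(x1,b) \<in> r \<longleftrightarrow> r = c" using uniq_rel[OF r cS, of x1 b] cb r by auto
    moreover have "(x2,b) \<in> r \<longleftrightarrow> r = c" using uniq_rel[OF r cS, of x2 b] cb r by auto
    ultimately show "((p,x1) \<in> r \<longleftrightarrow> (p,x2) \<in> r) \<and> ((x1,b) \<in> r \<longleftrightarrow> (x2,b) \<in> r) \<and> ((p,b) \<in> r \<longleftrightarrow> (p,b) \<in> r)"
      by simp
  qed
  hence "mmult M1 M2 x1 b = mmult M1 M2 x2 b" using P unfolding CC_def by blast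
  thus False using v1 v2 by simp
qed

end

theorem corollary4p12:
  fixes S :: "('x::finite \<times> 'x) set set"
  assumes "is_scheme S" and "quasi_thin S"
  shows "triply_regular TYPE('f::field) S \<longleftrightarrow>
    \<not> (\<exists>u\<in>S. \<exists>v\<in>S. \<exists>w\<in>S. \<exists>y\<in>S. \<exists>z\<in>S.
          valency u = 2 \<and> valency v = 2 \<and> valency w = 2 \<and> valency y = 2 \<and> valency z = 2 \<and>
          inum u v w = 1 \<and> inum w y z = 1 \<and> card (cprod S (converse u) z) = 1)"
proof -
  interpret qts S using assms by (simp add: qts_def qts_axioms_def qs_def)
  have TR: "triply_regular TYPE('f) S \<longleftrightarrow> (\<forall>p. unital_subalgebra (mspan (GG p) :: ('x,'f) mat set))"
    unfolding triply_regular_def GG_eq ..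
  show ?thesis
  proof
    assume tr: "triply_regular TYPE('f) S"
    show "\<not> (\<exists>u\<in>S. \<exists>v\<in>S. \<exists>w\<in>S. \<exists>y\<in>S. \<exists>z\<in>S.
          valency u = 2 \<and> valency v = 2 \<and> valency w = 2 \<and> valency y = 2 \<and> valency z = 2 \<and>
          inum u v w = 1 \<and> inum w y z = 1 \<and> card (cprod S (converse u) z) = 1)"
    proof
      assume "\<exists>u\<in>S. \<exists>v\<in>S. \<exists>w\<in>S. \<exists>y\<in>S. \<exists>z\<in>S.
          valency u = 2 \<and> valency v = 2 \<and> valency w = 2 \<and> valency y = 2 \<and> valency z = 2 \<and>
          inum u v w = 1 \<and> inum w y z = 1 \<and> card (cprod S (converse u) z) = 1"
      then obtain u v w y z where "u \<in> S" "v \<in> S" "w \<in> S" "y \<in> S" "z \<in> S"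
        "valency u = 2" "valency z = 2" "inum u v w = 1" "inum w y z = 1" "card (cprod S (converse u) z) = 1"
        by blast
      hence "\<not> unital_subalgebra (mspan (GG undefined) :: ('x,'f) mat set)" by (intro conf_notTR) 
      thus False using tr TR by blast
    qed
  next
    assume nc: "\<not> (\<exists>u\<in>S. \<exists>v\<in>S. \<exists>w\<in>S. \<exists>y\<in>S. \<exists>z\<in>S.
          valency u = 2 \<and> valency v = 2 \<and> valency w = 2 \<and> valency y = 2 \<and> valency z = 2 \<and>
          inum u v w = 1 \<and> inum w y z = 1 \<and> card (cprod S (converse u) z) = 1)"
    have "\<forall>p. unital_subalgebra (mspan (GG p) :: ('x,'f) mat set)"
    proof
      fix p
      show "unital_subalgebra (mspan (GG p) :: ('x,'f) mat set)"
        using CC_alg[OF nc, where 'f='f, of p] span_eq[where 'f='f, of p] by simp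
    qed
    thus "triply_regular TYPE('f) S" using TR by simp
  qed
qed


end
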